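(* Let $\Phi \in \mathbb{R}^{m \times n}$, let $S \subseteq [n]$ be such that $\Phi_S$ has full column rank, and let $\overline{S} = [n]\setminus S$. Let $X \in \mathbb{R}^{n \times K}$ ($K \geq 1$) with $\mathrm{supp}(X) = S$, and let $Y = \Phi X$. Let $S_t \subseteq S$ and let $P^{(t)} = \Phi_{S_t}\Phi_{S_t}^{+}$ be the orthogonal projector onto $\mathrm{span}(\Phi_{S_t})$ (with $P^{(t)} = 0$ if $S_t = \emptyset$). Let $R^{(t)} = (I - P^{(t)})Y = (I-P^{(t)})\Phi X$. Let $q_1,\dots,q_K \geq 0$ and $Q = \mathrm{diag}(q_1,\dots,q_K)$. Then $$\|\Phi_S^{\mathrm{T}} R^{(t)} Q\|_{\infty}\, \|\Phi_S^{+}\Phi_{\overline{S}}\|_{1} \;\geq\; \|\Phi_{\overline{S}}^{\mathrm{T}} R^{(t)} Q\|_{\infty}.$$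
   Context: For $S \subseteq [n]=\{1,\dots,n\}$, $\Phi_S$ denotes the submatrix of $\Phi$ consisting of the columns indexed by $S$. $A^{+}$ is the Moore–Penrose pseudoinverse. For a matrix $A$, $\|A\|_{\infty} = \max_i \sum_j |A_{i,j}|$ (the operator norm induced by $\ell_\infty$, i.e. maximal absolute row sum) and $\|A\|_{1} = \max_j \sum_i |A_{i,j}|$ (operator norm induced by $\ell_1$, maximal absolute column sum). For a matrix $X \in \mathbb{R}^{n\times K}$, $\mathrm{supp}(X)$ is the union of the supports of its columns, i.e. the set of row indices $i$ such that $X_{i,k}\neq 0$ for some $k$. *)

theory Defs
  imports "Jordan_Normal_Form.DL_Rank_Submatrix"
begin

(* Columns of A indexed by S (in increasing order); indices are 0-based, [n] = {0..<n} *)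
definition cols_sub :: "'a mat \<Rightarrow> nat set \<Rightarrow> 'a mat" where
  "cols_sub A S = submatrix A UNIV S"

definition full_col_rank :: "real mat \<Rightarrow> bool" where
  "full_col_rank A \<longleftrightarrow> vec_space.rank (dim_row A) A = dim_col A"

definition pinv :: "real mat \<Rightarrow> real mat" where
  "pinv A = (THE B. B \<in> carrier_mat (dim_col A) (dim_row A) \<and>
      A * B * A = A \<and> B * A * B = B \<and>
      transpose_mat (A * B) = A * B \<and> transpose_mat (B * A) = B * A)"

definition norm_inf :: "real mat \<Rightarrow> real" where
  "norm_inf A = Max (insert 0 {(\<Sum>j<dim_col A. \<bar>A $$ (i,j)\<bar>) | i. i < dim_row A})"

definition norm_one :: "real mat \<Rightarrow> real" where
  "norm_one A = Max (insert 0 {(\<Sum>i<dim_row A. \<bar>A $$ (i,j)\<bar>) | j. j < dim_col A})"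

definition msupp :: "real mat \<Rightarrow> nat set" where
  "msupp X = {i. i < dim_row X \<and> (\<exists>k<dim_col X. X $$ (i,k) \<noteq> 0)}"

definition diag_of :: "nat \<Rightarrow> (nat \<Rightarrow> real) \<Rightarrow> real mat" where
  "diag_of K q = mat K K (\<lambda>(i,j). if i = j then q i else 0)"

end

theory Submission
  imports Defs
begin


lemma (in vec_space) non_distinct_low_rank':
  assumes "A \<in> carrier_mat n nc" and "\<not> distinct (cols A)"
  shows "rank A < nc"
proof -
  obtain S where S: "maximal S (\<lambda>T. T \<subseteq> set (cols A) \<and> lin_indpt T)"
    using maximal_exists[of "(\<lambda>T. T \<subseteq> set (cols A) \<and> lin_indpt T)" "card (set (cols A))" "{}"]
    by (meson List.finite_set card_mono empty_iff empty_subsetI finite_lin_indpt2 rev_finite_subset)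
  then have "card S \<le> card (set (cols A))" by (simp add: card_mono maximal_def)
  moreover have "card (set (cols A)) < nc"
    using assms card_distinct card_length cols_length carrier_matD(2) nat_less_le by metis
  ultimately show ?thesis using rank_card_indpt[OF assms(1) S] by simp
qed

lemma full_rank_inj:
  fixes A :: "real mat"
  assumes A: "A \<in> carrier_mat m s" and r: "vec_space.rank m A = s"
    and v: "v \<in> carrier_vec s" and Av: "A *\<^sub>v v = 0\<^sub>v m"
  shows "v = 0\<^sub>v s"
proof (rule ccontr)
  assume nz: "v \<noteq> 0\<^sub>v s"
  show False
  proof (cases "distinct (cols A)")
    case True
    show False using vec_space.lin_depI[OF A v nz Av True] vec_space.full_rank_lin_indpt[OF A r True] by blast
  next
    case False
    then show False using vec_space.non_distinct_low_rank'[OF A False] r by simp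
  qed
qed



definition inj_mat :: "real mat \<Rightarrow> bool" where
  "inj_mat M \<longleftrightarrow> (\<forall>v \<in> carrier_vec (dim_col M). M *\<^sub>v v = 0\<^sub>v (dim_row M) \<longrightarrow> v = 0\<^sub>v (dim_col M))"

lemma self_scalar_zero:
  fixes w :: "real vec"
  assumes w: "w \<in> carrier_vec m" and z: "w \<bullet> w = 0"
  shows "w = 0\<^sub>v m"
proof -
  have "(\<Sum>i\<in>{0..<m}. w $ i * w $ i) = 0" using z w unfolding scalar_prod_def by auto
  then have "\<forall>i\<in>{0..<m}. w $ i * w $ i = 0"
    by (subst (asm) sum_nonneg_eq_0_iff) auto
  then show ?thesis using w by (intro eq_vecI) auto
qed

lemma gram_inv:
  assumes M: "M \<in> carrier_mat m s" and inj: "inj_mat M"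
  shows "\<exists>Ci \<in> carrier_mat s s. (transpose_mat M * M) * Ci = 1\<^sub>m s \<and> Ci * (transpose_mat M * M) = 1\<^sub>m s"
proof -
  let ?C = "transpose_mat M * M"
  have C: "?C \<in> carrier_mat s s" using M by auto
  have "det ?C \<noteq> 0"
  proof
    assume "det ?C = 0"
    then obtain v where v: "v \<in> carrier_vec s" "v \<noteq> 0\<^sub>v s" "?C *\<^sub>v v = 0\<^sub>v s"
      using det_0_iff_vec_prod_zero_field[OF C] by blast
    have Mv: "M *\<^sub>v v \<in> carrier_vec m" using M v by auto
    have "?C *\<^sub>v v = transpose_mat M *\<^sub>v (M *\<^sub>v v)"
      using M v by (intro assoc_mult_mat_vec) auto
    then have "(M *\<^sub>v v) \<bullet> (M *\<^sub>v v) = (?C *\<^sub>v v) \<bullet> v"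
      using transpose_vec_mult_scalar[OF M v(1) Mv] by simp
    also have "\<dots> = 0" using v by simp
    finally have "M *\<^sub>v v = 0\<^sub>v m" using self_scalar_zero Mv by blast
    then have "v = 0\<^sub>v s" using inj M v unfolding inj_mat_def by auto
    then show False using v by simp
  qed
  from det_non_zero_imp_unit[OF C this, of "()"]
  obtain B where B: "B \<in> carrier_mat s s" "B * ?C = 1\<^sub>m s"
    unfolding Units_def ring_mat_def by auto
  moreover have "?C * B = 1\<^sub>m s" using mat_mult_left_right_inverse[OF B(1) C B(2)] .
  ultimately show ?thesis by blast
qed

lemma pinv_inj:
  assumes M: "M \<in> carrier_mat m s" and inj: "inj_mat M"
  shows "pinv M \<in> carrier_mat s m" "M * pinv M * M = M" "transpose_mat (M * pinv M) = M * pinv M"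
proof -
  let ?C = "transpose_mat M * M"
  have C: "?C \<in> carrier_mat s s" using M by auto
  obtain Ci where Ci: "Ci \<in> carrier_mat s s" "?C * Ci = 1\<^sub>m s" "Ci * ?C = 1\<^sub>m s"
    using gram_inv[OF M inj] by blast
  have MT: "transpose_mat M \<in> carrier_mat s m" using M by auto
  have CT: "transpose_mat ?C = ?C" using M by (simp add: transpose_mult[OF MT M])
  have CiT: "transpose_mat Ci = Ci"
  proof -
    have "transpose_mat Ci * ?C = 1\<^sub>m s"
      using transpose_mult[OF C Ci(1)] Ci(2) CT by simp
    then have "transpose_mat Ci = transpose_mat Ci * (?C * Ci)" using Ci by simp
    also have "\<dots> = (transpose_mat Ci * ?C) * Ci" using Ci C by (simp add: assoc_mult_mat[of _ s s _ s _ s])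
    also have "\<dots> = Ci" using \<open>transpose_mat Ci * ?C = 1\<^sub>m s\<close> Ci by simp
    finally show ?thesis .
  qed
  define B0 where "B0 = Ci * transpose_mat M"
  have B0: "B0 \<in> carrier_mat s m" using Ci MT B0_def by auto
  have BM: "B0 * M = 1\<^sub>m s"
    unfolding B0_def using Ci M MT by (simp add: assoc_mult_mat[of _ s s _ s _ m])
  have P1: "M * B0 * M = M"
  proof -
    have "M * B0 * M = M * (B0 * M)" using M B0 by (intro assoc_mult_mat[of _ m s _ m _ s]) auto
    then show ?thesis using BM M by simp
  qed
  have P2: "B0 * M * B0 = B0" using BM B0 by simp
  have P3: "transpose_mat (M * B0) = M * B0"
  proof -
    have "transpose_mat (M * B0) = transpose_mat B0 * transpose_mat M" using transpose_mult[OF M B0] .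
    also have "transpose_mat B0 = M * Ci" unfolding B0_def using transpose_mult[OF Ci(1) MT] CiT by simp
    finally show ?thesis unfolding B0_def using M Ci MT
      by (simp add: assoc_mult_mat[of _ m s _ s _ m])
  qed
  have P4: "transpose_mat (B0 * M) = B0 * M" using BM by simp
  have uniq: "B = B0" if B: "B \<in> carrier_mat s m" "M * B * M = M" "transpose_mat (M * B) = M * B" for B
  proof -
    have "?C * B = transpose_mat M * (M * B)" using M MT B by simp
    also have "\<dots> = transpose_mat M * transpose_mat (M * B)" using B by simp
    also have "\<dots> = transpose_mat (M * B * M)"
      using transpose_mult[of "M * B" m m M s] M B by simp
    also have "\<dots> = transpose_mat M" using B by simp
    finally have "?C * B = transpose_mat M" .
    then have "Ci * (?C * B) = B0" unfolding B0_def by simp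
    moreover have "Ci * (?C * B) = B" using Ci C B
      by (simp add: assoc_mult_mat[of Ci s s ?C s B m, symmetric])
    ultimately show ?thesis by simp
  qed
  have "pinv M = B0"
    unfolding pinv_def using M
    apply (intro the_equality)
    subgoal using B0 P1 P2 P3 P4 by auto
    subgoal for B using uniq by auto
    done
  then show "pinv M \<in> carrier_mat s m" "M * pinv M * M = M" "transpose_mat (M * pinv M) = M * pinv M"
    using B0 P1 P3 by auto
qed



definition sel :: "nat \<Rightarrow> nat set \<Rightarrow> real mat" where
  "sel n T = mat n (card T) (\<lambda>(j,i). if j = pick T i then 1 else 0)"

lemma sel_carrier[simp]: "sel n T \<in> carrier_mat n (card T)"
  unfolding sel_def by auto

lemma sel_dim[simp]: "dim_row (sel n T) = n" "dim_col (sel n T) = card T"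
  unfolding sel_def by auto

lemma pick_T:
  assumes "T \<subseteq> {0..<n}" "i < card T"
  shows "pick T i \<in> T" "pick T i < n"
  using pick_in_set[of i T] assms by auto

lemma pick_inj:
  assumes "i < card T" "i' < card T" "pick T i = pick T i'"
  shows "i = i'"
  using pick_mono[of i T i'] pick_mono[of i' T i] assms by (metis less_irrefl nat_neq_iff)

lemma card_cols: "T \<subseteq> {0..<n} \<Longrightarrow> card {j. j < n \<and> j \<in> T} = card T"
  by (metis (no_types, lifting) Collect_mem_eq Collect_cong atLeastLessThan_iff subsetD)

lemma sum_delta_mult:
  fixes f :: "nat \<Rightarrow> real"
  assumes "p < n"
  shows "(\<Sum>j\<in>{0..<n}. f j * (if j = p then 1 else 0)) = f p"
proof -
  have "(\<Sum>j\<in>{0..<n}. f j * (if j = p then 1 else 0)) = (\<Sum>j\<in>{0..<n}. if j = p then f j else 0)"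
    by (rule sum.cong) auto
  also have "\<dots> = f p" using assms by (simp add: sum.delta')
  finally show ?thesis .
qed

lemma cols_sub_sel:
  assumes Phi: "\<Phi> \<in> carrier_mat m n" and T: "T \<subseteq> {0..<n}"
  shows "cols_sub \<Phi> T = \<Phi> * sel n T"
proof -
  have cT: "card {j. j < dim_col \<Phi> \<and> j \<in> T} = card T" using Phi card_cols[OF T] by simp
  have cR: "card {i. i < dim_row \<Phi> \<and> i \<in> UNIV} = m" using Phi by simp
  show ?thesis
  proof (rule eq_matI)
    fix r i assume r: "r < dim_row (\<Phi> * sel n T)" and i: "i < dim_col (\<Phi> * sel n T)"
    then have r': "r < m" and i': "i < card T" using Phi by auto
    have "cols_sub \<Phi> T $$ (r, i) = \<Phi> $$ (r, pick T i)"
      unfolding cols_sub_def using submatrix_index[of r \<Phi> UNIV i T] cT cR r' i' pick_UNIV by auto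
    also have "\<dots> = (\<Sum>j\<in>{0..<n}. \<Phi> $$ (r, j) * (if j = pick T i then 1 else 0))"
      using sum_delta_mult[OF pick_T(2)[OF T i']] by simp
    also have "\<dots> = (\<Phi> * sel n T) $$ (r, i)"
      using Phi r' i' unfolding sel_def by (auto simp: scalar_prod_def intro!: sum.cong)
    finally show "cols_sub \<Phi> T $$ (r, i) = (\<Phi> * sel n T) $$ (r, i)" .
  qed (auto simp: cols_sub_def dim_submatrix cT cR Phi)
qed

lemma selT_sel:
  assumes T: "T \<subseteq> {0..<n}"
  shows "transpose_mat (sel n T) * sel n T = 1\<^sub>m (card T)"
proof (rule eq_matI)
  fix i i' assume i: "i < dim_row (1\<^sub>m (card T))" and i': "i' < dim_col (1\<^sub>m (card T))"
  then have i: "i < card T" and i': "i' < card T" by auto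
  have "(transpose_mat (sel n T) * sel n T) $$ (i, i')
     = (\<Sum>j\<in>{0..<n}. (if j = pick T i then 1 else 0) * (if j = pick T i' then (1::real) else 0))"
    using i i' unfolding sel_def by (auto simp: scalar_prod_def intro!: sum.cong)
  also have "\<dots> = (if pick T i' = pick T i then 1 else 0)"
    using sum_delta_mult[OF pick_T(2)[OF T i'], of "\<lambda>j. if j = pick T i then 1 else 0"] by simp
  also have "\<dots> = 1\<^sub>m (card T) $$ (i, i')" using pick_inj[OF i i'] i i' by auto
  finally show "(transpose_mat (sel n T) * sel n T) $$ (i, i') = 1\<^sub>m (card T) $$ (i, i')" .
qed auto

lemma sel_proj:
  assumes T: "T \<subseteq> {0..<n}" and Z: "Z \<in> carrier_mat n k" and j: "j < n" and c: "c < k"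
  shows "(sel n T * (transpose_mat (sel n T) * Z)) $$ (j, c) = (if j \<in> T then Z $$ (j, c) else 0)"
proof -
  have inner: "(transpose_mat (sel n T) * Z) $$ (i, c) = Z $$ (pick T i, c)" if i: "i < card T" for i
  proof -
    have "(transpose_mat (sel n T) * Z) $$ (i, c)
        = (\<Sum>j'\<in>{0..<n}. Z $$ (j', c) * (if j' = pick T i then 1 else 0))"
      using i Z c unfolding sel_def by (auto simp: scalar_prod_def mult.commute intro!: sum.cong)
    also have "\<dots> = Z $$ (pick T i, c)" using sum_delta_mult[OF pick_T(2)[OF T i]] by simp
    finally show ?thesis .
  qed
  have "(sel n T * (transpose_mat (sel n T) * Z)) $$ (j, c)
      = (\<Sum>i\<in>{0..<card T}. (if j = pick T i then 1 else 0) * Z $$ (pick T i, c))"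
    using j c Z inner unfolding sel_def by (auto simp: scalar_prod_def intro!: sum.cong)
  also have "\<dots> = (if j \<in> T then Z $$ (j, c) else 0)"
  proof (cases "j \<in> T")
    case True
    define i0 where "i0 = card {a\<in>T. a < j}"
    have fin: "finite T" using T finite_subset by blast
    have pi0: "pick T i0 = j" unfolding i0_def using pick_card_in_set[OF True] .
    have ss: "{a\<in>T. a < j} \<subset> T" using True by auto
    have i0: "i0 < card T" unfolding i0_def
      using psubset_card_mono[OF fin ss] .
    have "(\<Sum>i\<in>{0..<card T}. (if j = pick T i then 1 else 0) * Z $$ (pick T i, c))
        = (\<Sum>i\<in>{0..<card T}. if i = i0 then Z $$ (j, c) else 0)"
    proof (rule sum.cong)
      fix i assume i: "i \<in> {0..<card T}"
      show "(if j = pick T i then 1 else 0) * Z $$ (pick T i, c) = (if i = i0 then Z $$ (j, c) else 0)"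
      proof (cases "i = i0")
        case True then show ?thesis using pi0 by simp
      next
        case False
        then have "pick T i \<noteq> j" using pick_inj[of i T i0] i i0 pi0 by auto
        then show ?thesis using False by simp
      qed
    qed simp
    also have "\<dots> = Z $$ (j, c)" using i0 by (simp add: sum.delta')
    finally show ?thesis using True by simp
  next
    case False
    have "\<And>i. i \<in> {0..<card T} \<Longrightarrow> j \<noteq> pick T i" using pick_T(1)[OF T] False by auto
    then show ?thesis using False by (auto intro!: sum.neutral)
  qed
  finally show ?thesis .
qed



lemma norm_inf_ge:
  assumes "i < dim_row M"
  shows "(\<Sum>j<dim_col M. \<bar>M $$ (i,j)\<bar>) \<le> norm_inf M"
  unfolding norm_inf_def using assms by (intro Max_ge) auto

lemma norm_inf_nonneg: "0 \<le> norm_inf M"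
  unfolding norm_inf_def by (intro Max_ge) auto

lemma norm_one_nonneg: "0 \<le> norm_one M"
  unfolding norm_one_def by (intro Max_ge) auto

lemma norm_one_ge:
  assumes "j < dim_col M"
  shows "(\<Sum>i<dim_row M. \<bar>M $$ (i,j)\<bar>) \<le> norm_one M"
  unfolding norm_one_def using assms by (intro Max_ge) auto

lemma norm_inf_le:
  assumes "\<And>i. i < dim_row M \<Longrightarrow> (\<Sum>j<dim_col M. \<bar>M $$ (i,j)\<bar>) \<le> c" and "0 \<le> c"
  shows "norm_inf M \<le> c"
  unfolding norm_inf_def using assms by (subst Max_le_iff) auto

lemma norm_mult:
  assumes N: "N \<in> carrier_mat s b" and M: "M \<in> carrier_mat s K"
  shows "norm_inf (transpose_mat N * M) \<le> norm_one N * norm_inf M"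
proof (rule norm_inf_le)
  show "0 \<le> norm_one N * norm_inf M"
    using norm_one_nonneg[of N] norm_inf_nonneg[of M] by simp
next
  fix i assume "i < dim_row (transpose_mat N * M)"
  then have i: "i < b" using N by simp
  have ent: "(transpose_mat N * M) $$ (i, k) = (\<Sum>j<s. N $$ (j, i) * M $$ (j, k))" if "k < K" for k
    using N M i that by (simp add: scalar_prod_def atLeast0LessThan)
  have "(\<Sum>k<dim_col (transpose_mat N * M). \<bar>(transpose_mat N * M) $$ (i, k)\<bar>)
      = (\<Sum>k<K. \<bar>\<Sum>j<s. N $$ (j, i) * M $$ (j, k)\<bar>)"
    using M ent by simp
  also have "\<dots> \<le> (\<Sum>k<K. \<Sum>j<s. \<bar>N $$ (j, i)\<bar> * \<bar>M $$ (j, k)\<bar>)"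
    by (intro sum_mono order_trans[OF sum_abs]) (simp add: abs_mult)
  also have "\<dots> = (\<Sum>j<s. \<bar>N $$ (j, i)\<bar> * (\<Sum>k<K. \<bar>M $$ (j, k)\<bar>))"
    by (subst sum.swap) (simp add: sum_distrib_left)
  also have "\<dots> \<le> (\<Sum>j<s. \<bar>N $$ (j, i)\<bar> * norm_inf M)"
    using norm_inf_ge[of _ M] M by (intro sum_mono mult_left_mono) auto
  also have "\<dots> = (\<Sum>j<s. \<bar>N $$ (j, i)\<bar>) * norm_inf M"
    by (simp add: sum_distrib_right)
  also have "\<dots> \<le> norm_one N * norm_inf M"
    using norm_one_ge[of i N] N i norm_inf_nonneg[of M] by (intro mult_right_mono) auto
  finally show "(\<Sum>j<dim_col (transpose_mat N * M). \<bar>(transpose_mat N * M) $$ (i, j)\<bar>) \<le> norm_one N * norm_inf M" .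
qed


lemma mat_zero_vec_real:
  fixes A :: "real mat"
  assumes "A \<in> carrier_mat nr nc"
  shows "A *\<^sub>v 0\<^sub>v nc = 0\<^sub>v nr"
  using assms by (intro eq_vecI) (auto simp: scalar_prod_def)

theorem lemma1:
  fixes \<Phi> X :: "real mat" and m n K :: nat and S St :: "nat set" and q :: "nat \<Rightarrow> real"
  assumes "\<Phi> \<in> carrier_mat m n"
    and "S \<subseteq> {0..<n}"
    and "full_col_rank (cols_sub \<Phi> S)"
    and "K \<ge> 1"
    and "X \<in> carrier_mat n K"
    and "msupp X = S"
    and "St \<subseteq> S"
    and "\<And>k. k < K \<Longrightarrow> q k \<ge> 0"
  shows "let Sbar = {0..<n} - S;
             Y = \<Phi> * X;
             P = cols_sub \<Phi> St * pinv (cols_sub \<Phi> St);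
             R = (1\<^sub>m m - P) * Y;
             Q = diag_of K q
         in norm_inf (transpose_mat (cols_sub \<Phi> S) * R * Q)
              * norm_one (pinv (cols_sub \<Phi> S) * cols_sub \<Phi> Sbar)
            \<ge> norm_inf (transpose_mat (cols_sub \<Phi> Sbar) * R * Q)"
proof -
  note Phi = assms(1) and SS = assms(2) and fr = assms(3) and Xc = assms(5) and supp = assms(6)
    and StS = assms(7)
  define Sbar where "Sbar = {0..<n} - S"
  define s where "s = card S"
  define t where "t = card St"
  define b where "b = card Sbar"
  have StN: "St \<subseteq> {0..<n}" using StS SS by auto
  have SbN: "Sbar \<subseteq> {0..<n}" unfolding Sbar_def by auto
  define GS where "GS = sel n S"
  define GT where "GT = sel n St"
  define GB where "GB = sel n Sbar"
  have GS: "GS \<in> carrier_mat n s" unfolding GS_def s_def by simp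
  have GT: "GT \<in> carrier_mat n t" unfolding GT_def t_def by simp
  have GB: "GB \<in> carrier_mat n b" unfolding GB_def b_def by simp
  define A where "A = cols_sub \<Phi> S"
  define Ast where "Ast = cols_sub \<Phi> St"
  define B where "B = cols_sub \<Phi> Sbar"
  have A_eq: "A = \<Phi> * GS" unfolding A_def GS_def using cols_sub_sel[OF Phi SS] .
  have Ast_eq: "Ast = \<Phi> * GT" unfolding Ast_def GT_def using cols_sub_sel[OF Phi StN] .
  have B_eq: "B = \<Phi> * GB" unfolding B_def GB_def using cols_sub_sel[OF Phi SbN] .
  have A: "A \<in> carrier_mat m s" using A_eq Phi GS by simp
  have Bc: "B \<in> carrier_mat m b" using B_eq Phi GB by simp
  have injA: "inj_mat A"
    unfolding inj_mat_def
  proof (intro ballI impI)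
    fix v assume v: "v \<in> carrier_vec (dim_col A)" and Av: "A *\<^sub>v v = 0\<^sub>v (dim_row A)"
    have r: "vec_space.rank m A = s" using fr A unfolding full_col_rank_def A_def by simp
    show "v = 0\<^sub>v (dim_col A)" using full_rank_inj[OF A r] v Av A by simp
  qed
  define F where "F = transpose_mat GS * GT"
  have Fc: "F \<in> carrier_mat s t" unfolding F_def using GS GT by simp
  have GSF: "GS * F = GT"
  proof (rule eq_matI)
    fix j c assume j: "j < dim_row GT" and c: "c < dim_col GT"
    then have j': "j < n" and c': "c < t" using GT by auto
    have "(GS * F) $$ (j, c) = (if j \<in> S then GT $$ (j, c) else 0)"
      unfolding F_def GS_def using sel_proj[OF SS GT j' c'] GT_def by simp
    also have "\<dots> = GT $$ (j, c)"
    proof (cases "j \<in> S")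
      case False
      have "pick St c \<in> St" using pick_T(1)[OF StN] c' t_def by simp
      then have "j \<noteq> pick St c" using False StS by auto
      then show ?thesis using False j' c' unfolding GT_def t_def sel_def by simp
    qed simp
    finally show "(GS * F) $$ (j, c) = GT $$ (j, c)" .
  qed (use GS GT Fc in auto)
  have Ast_AF: "Ast = A * F"
    using Ast_eq A_eq GSF Phi GS Fc by (simp add: assoc_mult_mat[of \<Phi> m n GS s F t])
  have Astc: "Ast \<in> carrier_mat m t" using Ast_AF A Fc by simp
  have injAst: "inj_mat Ast"
    unfolding inj_mat_def
  proof (intro ballI impI)
    fix v assume v: "v \<in> carrier_vec (dim_col Ast)" and Av: "Ast *\<^sub>v v = 0\<^sub>v (dim_row Ast)"
    then have v': "v \<in> carrier_vec t" using Astc by simp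
    have "A *\<^sub>v (F *\<^sub>v v) = 0\<^sub>v m" using Av Astc Ast_AF A Fc v' by simp
    then have Fv: "F *\<^sub>v v = 0\<^sub>v s"
      using injA A Fc v' unfolding inj_mat_def by auto
    have "GT *\<^sub>v v = GS *\<^sub>v (F *\<^sub>v v)" using GSF GS Fc v' by (metis assoc_mult_mat_vec)
    moreover have "GS *\<^sub>v 0\<^sub>v s = 0\<^sub>v n" using GS by (intro eq_vecI) (auto simp: scalar_prod_def)
    ultimately have GTv: "GT *\<^sub>v v = 0\<^sub>v n" using Fv by simp
    have "v = (transpose_mat GT * GT) *\<^sub>v v"
      using selT_sel[OF StN] GT_def t_def v' by simp
    also have "\<dots> = transpose_mat GT *\<^sub>v (GT *\<^sub>v v)" using GT v' by (intro assoc_mult_mat_vec) auto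
    also have "\<dots> = 0\<^sub>v t" using GTv GT mat_zero_vec_real[of "transpose_mat GT" t n] by simp
    finally show "v = 0\<^sub>v (dim_col Ast)" using Astc by simp
  qed
  define Ap where "Ap = pinv A"
  define Tp where "Tp = pinv Ast"
  have Apc: "Ap \<in> carrier_mat s m" and AApA: "A * Ap * A = A" and HT: "transpose_mat (A * Ap) = A * Ap"
    using pinv_inj[OF A injA] unfolding Ap_def by auto
  have Tpc: "Tp \<in> carrier_mat t m" using pinv_inj[OF Astc injAst] unfolding Tp_def by auto
  define X' where "X' = transpose_mat GS * X"
  have X'c: "X' \<in> carrier_mat s K" unfolding X'_def using GS Xc by simp
  have GSX: "GS * X' = X"
  proof (rule eq_matI)
    fix j c assume j: "j < dim_row X" and c: "c < dim_col X"
    then have j': "j < n" and c': "c < K" using Xc by auto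
    have "(GS * X') $$ (j, c) = (if j \<in> S then X $$ (j, c) else 0)"
      unfolding X'_def GS_def using sel_proj[OF SS Xc j' c'] by simp
    also have "\<dots> = X $$ (j, c)"
    proof (cases "j \<in> S")
      case False
      then show ?thesis using supp j' c' Xc unfolding msupp_def by auto
    qed simp
    finally show "(GS * X') $$ (j, c) = X $$ (j, c)" .
  qed (use GS Xc X'c in auto)
  define Y where "Y = \<Phi> * X"
  have Yc: "Y \<in> carrier_mat m K" unfolding Y_def using Phi Xc by simp
  have Y_eq: "Y = A * X'"
    unfolding Y_def A_eq using GSX Phi GS X'c by (simp add: assoc_mult_mat[of \<Phi> m n GS s X' K])
  define P where "P = Ast * Tp"
  have Pc: "P \<in> carrier_mat m m" unfolding P_def using Astc Tpc by simp
  define R where "R = (1\<^sub>m m - P) * Y"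
  define W where "W = X' - F * (Tp * Y)"
  have Wc: "W \<in> carrier_mat s K" unfolding W_def using X'c Fc Tpc Yc by (intro minus_carrier_mat mult_carrier_mat) auto
  have R_eq: "R = A * W"
  proof -
    have "R = 1\<^sub>m m * Y - P * Y" unfolding R_def using Pc Yc by (intro minus_mult_distrib_mat) auto
    also have "1\<^sub>m m * Y = A * X'" using Y_eq left_mult_one_mat[OF Yc] by simp
    also have "P * Y = A * (F * (Tp * Y))"
    proof -
      have AF: "A * F \<in> carrier_mat m t" using A Fc by simp
      have TY: "Tp * Y \<in> carrier_mat t K" using Tpc Yc by simp
      have "A * F * Tp * Y = (A * F) * (Tp * Y)" using assoc_mult_mat[OF AF Tpc Yc] .
      also have "\<dots> = A * (F * (Tp * Y))" using assoc_mult_mat[OF A Fc TY] .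
      finally show ?thesis unfolding P_def Ast_AF .
    qed
    also have "A * X' - A * (F * (Tp * Y)) = A * W"
      unfolding W_def using A X'c Fc Tpc Yc by (intro mult_minus_distrib_mat[symmetric]) auto
    finally show ?thesis .
  qed
  have Rc: "R \<in> carrier_mat m K" using R_eq A Wc by simp
  have HR: "A * Ap * R = R"
  proof -
    have H: "A * Ap \<in> carrier_mat m m" using A Apc by simp
    have "A * Ap * R = (A * Ap * A) * W" unfolding R_eq using assoc_mult_mat[OF H A Wc] by simp
    then show ?thesis using AApA R_eq by simp
  qed
  define Q where "Q = diag_of K q"
  have Qc: "Q \<in> carrier_mat K K" unfolding Q_def diag_of_def by simp
  define N where "N = Ap * B"
  have Nc: "N \<in> carrier_mat s b" unfolding N_def using Apc Bc by simp
  define M where "M = transpose_mat A * R * Q"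
  have Mc: "M \<in> carrier_mat s K" unfolding M_def using A Rc Qc by simp
  have BR: "transpose_mat B * R = transpose_mat N * (transpose_mat A * R)"
  proof -
    have "transpose_mat B * R = transpose_mat B * (transpose_mat (A * Ap) * R)" using HT HR by simp
    also have "transpose_mat (A * Ap) = transpose_mat Ap * transpose_mat A"
      using transpose_mult[OF A Apc] .
    also have "transpose_mat B * (transpose_mat Ap * transpose_mat A * R)
        = (transpose_mat B * transpose_mat Ap) * (transpose_mat A * R)"
    proof -
      have BT: "transpose_mat B \<in> carrier_mat b m" using Bc by simp
      have ApT: "transpose_mat Ap \<in> carrier_mat m s" using Apc by simp
      have AT: "transpose_mat A \<in> carrier_mat s m" using A by simp
      have ATR: "transpose_mat A * R \<in> carrier_mat s K" using A Rc by simp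
      show ?thesis using assoc_mult_mat[OF ApT AT Rc] assoc_mult_mat[OF BT ApT ATR] by simp
    qed
    also have "transpose_mat B * transpose_mat Ap = transpose_mat N"
      unfolding N_def using transpose_mult[OF Apc Bc] by simp
    finally show ?thesis .
  qed
  have BRQ: "transpose_mat B * R * Q = transpose_mat N * M"
  proof -
    have NT: "transpose_mat N \<in> carrier_mat b s" using Nc by simp
    have ATR: "transpose_mat A * R \<in> carrier_mat s K" using A Rc by simp
    show ?thesis unfolding BR M_def using assoc_mult_mat[OF NT ATR Qc] .
  qed
  have "norm_inf (transpose_mat B * R * Q) \<le> norm_one N * norm_inf M"
    unfolding BRQ using norm_mult[OF Nc Mc] .
  then show ?thesis
    unfolding Let_def Sbar_def[symmetric] Y_def[symmetric] Ast_def[symmetric] Tp_def[symmetric]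
      P_def[symmetric] R_def[symmetric] Q_def[symmetric] A_def[symmetric] B_def[symmetric] Ap_def[symmetric]
      N_def[symmetric] M_def[symmetric]
    by (simp add: mult.commute)
qed

end
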